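(* Let $(K^{(n)})_{n\ge1}$ be a consistent family of Markov kernels, $K^{(n)}$ an order-preserving Markov kernel on $\mathbb{R}^n$ for each $n$. Then for all $n\ge2$ and every bounded Borel supermodular $f:\mathbb{R}^n\to\mathbb{R}$, $K^{(n)}f$ is a bounded Borel supermodular function.
   Context: $f$ is supermodular if $f(\mathbf{x})+f(\mathbf{y})\le f(\mathbf{x}\vee\mathbf{y})+f(\mathbf{x}\wedge\mathbf{y})$ for all $\mathbf{x},\mathbf{y}$, with $\vee,\wedge$ componentwise max and min. $K^{(n)}f(\mathbf{x})=\int f(\mathbf{y})K^{(n)}(\mathbf{x},d\mathbf{y})$. A kernel $K$ on $\mathbb{R}^n$ is order-preserving if $K(\mathbf{x},\mathbb{R}^n_{\mathbf{x}})=1$ for all $\mathbf{x}$, where $\mathbb{R}^n_{\mathbf{x}}=\{\mathbf{y}:\forall i,j,\ x_i\le x_j\Rightarrow y_i\le y_j\}$. The family is consistent if $K^{(n)}(\mathbf{x},(\pi^n_{i_1,\dots,i_k})^{-1}(B))=K^{(k)}(\pi^n_{i_1,\dots,i_k}(\mathbf{x}),B)$ for all $1\le k\le n$, $i_1,\dots,i_k\in\{1,\dots,n\}$ (repetitions allowed), $\mathbf{x}\in\mathbb{R}^n$ and Borel $B\subset\mathbb{R}^k$, where $\pi^n_{i_1,\dots,i_k}(\mathbf{x})=(x_{i_1},\dots,x_{i_k})$. *)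

theory Defs
  imports "HOL-Probability.Probability"
begin

text \<open>R^n is modelled as the extensional functions on the index set {..<n}
  (coordinates 0..n-1) with the product Borel sigma-algebra.\<close>
definition Rn :: "nat \<Rightarrow> (nat \<Rightarrow> real) measure" where
  "Rn n = PiM {..<n} (\<lambda>_. borel)"

definition vmax :: "nat \<Rightarrow> (nat \<Rightarrow> real) \<Rightarrow> (nat \<Rightarrow> real) \<Rightarrow> (nat \<Rightarrow> real)" where
  "vmax n x y = (\<lambda>i\<in>{..<n}. max (x i) (y i))"

definition vmin :: "nat \<Rightarrow> (nat \<Rightarrow> real) \<Rightarrow> (nat \<Rightarrow> real) \<Rightarrow> (nat \<Rightarrow> real)" where
  "vmin n x y = (\<lambda>i\<in>{..<n}. min (x i) (y i))"

definition supermodular :: "nat \<Rightarrow> ((nat \<Rightarrow> real) \<Rightarrow> real) \<Rightarrow> bool" where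
  "supermodular n f \<longleftrightarrow>
     (\<forall>x\<in>space (Rn n). \<forall>y\<in>space (Rn n). f x + f y \<le> f (vmax n x y) + f (vmin n x y))"

definition bounded_on_Rn :: "nat \<Rightarrow> ((nat \<Rightarrow> real) \<Rightarrow> real) \<Rightarrow> bool" where
  "bounded_on_Rn n f \<longleftrightarrow> (\<exists>C. \<forall>x\<in>space (Rn n). \<bar>f x\<bar> \<le> C)"

definition markov_kernel :: "nat \<Rightarrow> ((nat \<Rightarrow> real) \<Rightarrow> (nat \<Rightarrow> real) measure) \<Rightarrow> bool" where
  "markov_kernel n K \<longleftrightarrow> K \<in> Rn n \<rightarrow>\<^sub>M prob_algebra (Rn n)"

definition order_set :: "nat \<Rightarrow> (nat \<Rightarrow> real) \<Rightarrow> (nat \<Rightarrow> real) set" where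
  "order_set n x = {y \<in> space (Rn n). \<forall>i<n. \<forall>j<n. x i \<le> x j \<longrightarrow> y i \<le> y j}"

definition order_preserving :: "nat \<Rightarrow> ((nat \<Rightarrow> real) \<Rightarrow> (nat \<Rightarrow> real) measure) \<Rightarrow> bool" where
  "order_preserving n K \<longleftrightarrow> (\<forall>x\<in>space (Rn n). emeasure (K x) (order_set n x) = 1)"

text \<open>Coordinate projection pi^n_{i_1..i_k} (0-based indices i 0, ..., i (k-1)).\<close>
definition proj :: "nat \<Rightarrow> (nat \<Rightarrow> nat) \<Rightarrow> (nat \<Rightarrow> real) \<Rightarrow> (nat \<Rightarrow> real)" where
  "proj k i x = (\<lambda>j\<in>{..<k}. x (i j))"

definition consistent :: "(nat \<Rightarrow> (nat \<Rightarrow> real) \<Rightarrow> (nat \<Rightarrow> real) measure) \<Rightarrow> bool" where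
  "consistent K \<longleftrightarrow>
     (\<forall>n\<ge>1. \<forall>k. 1 \<le> k \<and> k \<le> n \<longrightarrow> (\<forall>i. (\<forall>j<k. i j < n) \<longrightarrow>
        (\<forall>x\<in>space (Rn n). \<forall>B\<in>sets (Rn k).
           emeasure (K n x) (proj k i -` B \<inter> space (Rn n)) = emeasure (K k (proj k i x)) B)))"

definition kernel_apply :: "((nat \<Rightarrow> real) \<Rightarrow> (nat \<Rightarrow> real) measure) \<Rightarrow> ((nat \<Rightarrow> real) \<Rightarrow> real) \<Rightarrow> (nat \<Rightarrow> real) \<Rightarrow> real" where
  "kernel_apply K f x = (\<integral>y. f y \<partial>K x)"

end

theory Submission
  imports Defs
begin

lemma proj_meas:
  assumes "\<And>j. j < k \<Longrightarrow> i j < m"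
  shows "proj k i \<in> Rn m \<rightarrow>\<^sub>M Rn k"
  unfolding proj_def Rn_def
  by (intro measurable_restrict measurable_component_singleton) (auto simp: assms)

lemma kernel_facts:
  assumes "markov_kernel n K" "x \<in> space (Rn n)"
  shows "sets (K x) = sets (Rn n)" "prob_space (K x)"
  using measurable_space[OF assms(1)[unfolded markov_kernel_def] assms(2)]
  by (auto simp: space_prob_algebra)

lemma space_Rn: "x \<in> space (Rn n) \<longleftrightarrow> (\<forall>i. i \<ge> n \<longrightarrow> x i = undefined)"
  unfolding Rn_def space_PiM PiE_def extensional_def by auto

lemma consistent_distr:
  assumes cons: "consistent K" and mk: "markov_kernel k (K k)" "markov_kernel m (K m)"
    and "1 \<le> k" "k \<le> m" "\<And>j. j < k \<Longrightarrow> i j < m" "z \<in> space (Rn m)"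
  shows "distr (K m z) (Rn k) (proj k i) = K k (proj k i z)"
proof -
  have pm: "proj k i \<in> Rn m \<rightarrow>\<^sub>M Rn k" using proj_meas assms by blast
  have pz: "proj k i z \<in> space (Rn k)" using measurable_space[OF pm assms(7)] .
  have s1: "sets (K m z) = sets (Rn m)" using kernel_facts[OF mk(2) assms(7)] by simp
  have s2: "sets (K k (proj k i z)) = sets (Rn k)" using kernel_facts[OF mk(1) pz] by simp
  have pm': "proj k i \<in> K m z \<rightarrow>\<^sub>M Rn k" using pm measurable_cong_sets[OF s1 refl] by blast
  show ?thesis
  proof (rule measure_eqI)
    show "sets (distr (K m z) (Rn k) (proj k i)) = sets (K k (proj k i z))" using s2 by simp
    fix B assume "B \<in> sets (distr (K m z) (Rn k) (proj k i))"
    then have B: "B \<in> sets (Rn k)" by simp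
    have sp: "space (K m z) = space (Rn m)" using s1 sets_eq_imp_space_eq by blast
    have "emeasure (distr (K m z) (Rn k) (proj k i)) B = emeasure (K m z) (proj k i -` B \<inter> space (Rn m))"
      using emeasure_distr[OF pm' B] sp by simp
    also have "\<dots> = emeasure (K k (proj k i z)) B"
      using cons assms B unfolding consistent_def by auto
    finally show "emeasure (distr (K m z) (Rn k) (proj k i)) B = emeasure (K k (proj k i z)) B" .
  qed
qed

lemma bounded_integrable:
  fixes g :: "'a \<Rightarrow> real"
  assumes "prob_space M" "g \<in> borel_measurable M" "\<And>w. w \<in> space M \<Longrightarrow> \<bar>g w\<bar> \<le> C"
  shows "integrable M g"
proof -
  interpret prob_space M by fact
  show ?thesis by (rule integrable_const_bound[of g C]) (use assms in auto)
qed

lemma int_eq: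
  assumes cons: "consistent K" and mk: "markov_kernel n (K n)" "markov_kernel m (K m)"
    and "1 \<le> n" "n \<le> m" "\<And>j. j < n \<Longrightarrow> i j < m" "z \<in> space (Rn m)"
    and f: "f \<in> borel_measurable (Rn n)"
  shows "kernel_apply (K n) f (proj n i z) = (\<integral>w. f (proj n i w) \<partial>K m z)"
proof -
  have pm: "proj n i \<in> Rn m \<rightarrow>\<^sub>M Rn n" using proj_meas assms by blast
  have s1: "sets (K m z) = sets (Rn m)" using kernel_facts[OF mk(2) assms(7)] by simp
  have pm': "proj n i \<in> K m z \<rightarrow>\<^sub>M Rn n" using pm measurable_cong_sets[OF s1 refl] by blast
  show ?thesis
    unfolding kernel_apply_def
    using consistent_distr[OF assms(1-7)] integral_distr[OF pm' f] by simp
qed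

theorem proposition4p1:
  fixes K :: "nat \<Rightarrow> (nat \<Rightarrow> real) \<Rightarrow> (nat \<Rightarrow> real) measure"
  assumes markov: "\<And>n. n \<ge> 1 \<Longrightarrow> markov_kernel n (K n)"
    and ord: "\<And>n. n \<ge> 1 \<Longrightarrow> order_preserving n (K n)"
    and cons: "consistent K"
    and n: "n \<ge> 2"
    and f_meas: "f \<in> borel_measurable (Rn n)"
    and f_bdd: "bounded_on_Rn n f"
    and f_sm: "supermodular n f"
  shows "kernel_apply (K n) f \<in> borel_measurable (Rn n)
       \<and> bounded_on_Rn n (kernel_apply (K n) f)
       \<and> supermodular n (kernel_apply (K n) f)"
proof (intro conjI)
  have mk: "markov_kernel n (K n)" using markov n by simp
  obtain C where C: "\<And>x. x \<in> space (Rn n) \<Longrightarrow> \<bar>f x\<bar> \<le> C" using f_bdd unfolding bounded_on_Rn_def by blast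
  show "kernel_apply (K n) f \<in> borel_measurable (Rn n)"
  proof -
    have "(\<lambda>x. integral\<^sup>L (K n x) f) \<in> borel_measurable (Rn n)"
      using measurable_comp[OF measurable_prob_algebraD[OF mk[unfolded markov_kernel_def]]
          integral_measurable_subprob_algebra[OF f_meas]] by (simp add: comp_def)
    then show ?thesis unfolding kernel_apply_def by (simp add: fun_eq_iff)
  qed
  show "bounded_on_Rn n (kernel_apply (K n) f)"
    unfolding bounded_on_Rn_def
  proof (intro exI ballI)
    fix x assume x: "x \<in> space (Rn n)"
    interpret P: prob_space "K n x" using kernel_facts[OF mk x] by simp
    have s: "sets (K n x) = sets (Rn n)" using kernel_facts[OF mk x] by simp
    have sp: "space (K n x) = space (Rn n)" using s sets_eq_imp_space_eq by blast
    have fm: "f \<in> borel_measurable (K n x)" using f_meas measurable_cong_sets[OF s refl] by blast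
    have "integrable (K n x) (\<lambda>w. \<bar>f w\<bar>)"
      using bounded_integrable[OF P.prob_space_axioms, of "\<lambda>w. \<bar>f w\<bar>" C] fm C sp by auto
    then have "(\<integral>w. \<bar>f w\<bar> \<partial>K n x) \<le> C"
      using P.integral_le_const[of "\<lambda>w. \<bar>f w\<bar>" C] C sp by auto
    then show "\<bar>kernel_apply (K n) f x\<bar> \<le> C"
      unfolding kernel_apply_def using integral_abs_bound[of "K n x" f] by linarith
  qed
  show "supermodular n (kernel_apply (K n) f)"
    unfolding supermodular_def
  proof (intro ballI)
    fix x y assume x: "x \<in> space (Rn n)" and y: "y \<in> space (Rn n)"
    define m where "m = 2 * n"
    have m1: "1 \<le> m" "n \<le> m" "1 \<le> n" using n by (auto simp: m_def)
    have mkm: "markov_kernel m (K m)" using markov m1 by simp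
    define z where "z = (\<lambda>j\<in>{..<m}. if j < n then x j else y (j - n))"
    have z: "z \<in> space (Rn m)" unfolding space_Rn z_def by auto
    define i1 :: "nat \<Rightarrow> nat" where "i1 = (\<lambda>j. j)"
    define i2 :: "nat \<Rightarrow> nat" where "i2 = (\<lambda>j. n + j)"
    define ia :: "nat \<Rightarrow> nat" where "ia = (\<lambda>j. if y j \<le> x j then j else n + j)"
    define ib :: "nat \<Rightarrow> nat" where "ib = (\<lambda>j. if y j \<le> x j then n + j else j)"
    have idx: "\<And>j. j < n \<Longrightarrow> i1 j < m" "\<And>j. j < n \<Longrightarrow> i2 j < m"
      "\<And>j. j < n \<Longrightarrow> ia j < m" "\<And>j. j < n \<Longrightarrow> ib j < m"
      by (auto simp: i1_def i2_def ia_def ib_def m_def)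
    have xs: "\<And>j. j \<ge> n \<Longrightarrow> x j = undefined" and ys: "\<And>j. j \<ge> n \<Longrightarrow> y j = undefined"
      using x y by (auto simp: space_Rn)
    have p1: "proj n i1 z = x" using xs by (auto simp: proj_def i1_def z_def m_def fun_eq_iff)
    have p2: "proj n i2 z = y" using ys by (auto simp: proj_def i2_def z_def m_def fun_eq_iff)
    have pa: "proj n ia z = vmax n x y" by (auto simp: proj_def ia_def z_def m_def fun_eq_iff vmax_def)
    have pb: "proj n ib z = vmin n x y" by (auto simp: proj_def ib_def z_def m_def fun_eq_iff vmin_def)
    let ?M = "K m z"
    interpret P: prob_space ?M using kernel_facts[OF mkm z] by simp
    have s: "sets ?M = sets (Rn m)" using kernel_facts[OF mkm z] by simp
    have sp: "space ?M = space (Rn m)" using s sets_eq_imp_space_eq by blast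
    have gm: "(\<lambda>w. f (proj n i w)) \<in> borel_measurable ?M" if "\<And>j. j < n \<Longrightarrow> i j < m" for i
    proof -
      have "(\<lambda>w. f (proj n i w)) \<in> borel_measurable (Rn m)"
        using measurable_comp[OF proj_meas[OF that] f_meas] by (simp add: comp_def)
      then show ?thesis using measurable_cong_sets[OF s refl] by blast
    qed
    have gi: "integrable ?M (\<lambda>w. f (proj n i w))" if "\<And>j. j < n \<Longrightarrow> i j < m" for i
      using bounded_integrable[OF P.prob_space_axioms gm[OF that], where C=C] C
        measurable_space[OF proj_meas[OF that]] sp by auto
    have e: "kernel_apply (K n) f (proj n i z) = (\<integral>w. f (proj n i w) \<partial>?M)"
      if "\<And>j. j < n \<Longrightarrow> i j < m" for i
      by (rule int_eq[OF cons mk mkm m1(3) m1(2) _ z f_meas]) (rule that)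
    have AEo: "AE w in ?M. w \<in> order_set m z"
    proof (rule P.AE_prob_1)
      show "P.prob (order_set m z) = 1"
        using ord[OF m1(1)] z unfolding order_preserving_def measure_def by simp
    qed
    have AEi: "AE w in ?M. f (proj n i1 w) + f (proj n i2 w) \<le> f (proj n ia w) + f (proj n ib w)"
      using AEo
    proof eventually_elim
      case (elim w)
      have w: "w \<in> space (Rn m)" and wo: "\<And>a b. a < m \<Longrightarrow> b < m \<Longrightarrow> z a \<le> z b \<Longrightarrow> w a \<le> w b"
        using elim unfolding order_set_def by auto
      have A: "proj n ia w = vmax n (proj n i1 w) (proj n i2 w)"
      proof
        fix j show "proj n ia w j = vmax n (proj n i1 w) (proj n i2 w) j"
        proof (cases "j < n")
          case True
          have zj: "z j = x j" "z (n + j) = y j" using True by (auto simp: z_def m_def)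
          show ?thesis
          proof (cases "y j \<le> x j")
            case True
            then have "w (n + j) \<le> w j" using wo[of "n+j" j] zj \<open>j < n\<close> by (auto simp: m_def)
            then show ?thesis using True \<open>j < n\<close> by (auto simp: proj_def vmax_def ia_def i1_def i2_def)
          next
            case False
            then have "w j \<le> w (n + j)" using wo[of j "n+j"] zj \<open>j < n\<close> by (auto simp: m_def)
            then show ?thesis using False \<open>j < n\<close> by (auto simp: proj_def vmax_def ia_def i1_def i2_def)
          qed
        qed (auto simp: proj_def vmax_def)
      qed
      have B: "proj n ib w = vmin n (proj n i1 w) (proj n i2 w)"
      proof
        fix j show "proj n ib w j = vmin n (proj n i1 w) (proj n i2 w) j"
        proof (cases "j < n")
          case True
          have zj: "z j = x j" "z (n + j) = y j" using True by (auto simp: z_def m_def)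
          show ?thesis
          proof (cases "y j \<le> x j")
            case True
            then have "w (n + j) \<le> w j" using wo[of "n+j" j] zj \<open>j < n\<close> by (auto simp: m_def)
            then show ?thesis using True \<open>j < n\<close> by (auto simp: proj_def vmin_def ib_def i1_def i2_def)
          next
            case False
            then have "w j \<le> w (n + j)" using wo[of j "n+j"] zj \<open>j < n\<close> by (auto simp: m_def)
            then show ?thesis using False \<open>j < n\<close> by (auto simp: proj_def vmin_def ib_def i1_def i2_def)
          qed
        qed (auto simp: proj_def vmin_def)
      qed
      have "proj n i1 w \<in> space (Rn n)" "proj n i2 w \<in> space (Rn n)"
        using measurable_space[OF proj_meas[of n i1, OF idx(1)] w] measurable_space[OF proj_meas[of n i2, OF idx(2)] w] by auto
      then show ?case using f_sm A B unfolding supermodular_def by simp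
    qed
    have "kernel_apply (K n) f x + kernel_apply (K n) f y
        = (\<integral>w. f (proj n i1 w) \<partial>?M) + (\<integral>w. f (proj n i2 w) \<partial>?M)"
      using e[of i1, OF idx(1)] e[of i2, OF idx(2)] p1 p2 by simp
    also have "\<dots> = (\<integral>w. f (proj n i1 w) + f (proj n i2 w) \<partial>?M)"
      using gi[of i1, OF idx(1)] gi[of i2, OF idx(2)] by simp
    also have "\<dots> \<le> (\<integral>w. f (proj n ia w) + f (proj n ib w) \<partial>?M)"
      using AEi gi[of i1, OF idx(1)] gi[of i2, OF idx(2)] gi[of ia, OF idx(3)] gi[of ib, OF idx(4)]
      by (intro integral_mono_AE) auto
    also have "\<dots> = (\<integral>w. f (proj n ia w) \<partial>?M) + (\<integral>w. f (proj n ib w) \<partial>?M)"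
      using gi[of ia, OF idx(3)] gi[of ib, OF idx(4)] by simp
    also have "\<dots> = kernel_apply (K n) f (vmax n x y) + kernel_apply (K n) f (vmin n x y)"
      using e[of ia, OF idx(3)] e[of ib, OF idx(4)] pa pb by simp
    finally show "kernel_apply (K n) f x + kernel_apply (K n) f y
        \<le> kernel_apply (K n) f (vmax n x y) + kernel_apply (K n) f (vmin n x y)" .
  qed
qed

end
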